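(* For each SES $\sigma=(E,\#,\to,\triangleright)$ there is an RCES $\rho$ (over the same event set $E$) such that $\sigma$ and $\rho$ are transition equivalent.
   Context: SES: $\sigma=(E,\#,\to,\triangleright)$ with $\#\subseteq E^2$ irreflexive and symmetric, $\to\subseteq E^2$ an arbitrary binary relation, $\triangleright\subseteq E^3$ with $(c,d,t)\in\triangleright$ implying $c\to t$. $\mathrm{ic}(e)=\{e'\mid e'\to e\}$, $\mathrm{dc}(H,e)=\{e'\mid\exists d\in H.(e',d,e)\in\triangleright\}$. SES transitions: for $X,Y\subseteq E$, $X\to_s Y$ iff $X\subseteq Y$, $\neg(e\#e')$ for all $e,e'\in Y$, and $\mathrm{ic}(e)\setminus\mathrm{dc}(X,e)\subseteq X$ for all $e\in Y\setminus X$. Event structure for resolvable conflict (RCES): a pair $\rho=(E,\vdash)$ with $\vdash\subseteq 2^E\times 2^E$. For $X,Y\subseteq E$, $X\to_{rc}Y$ iff $X\subseteq Y$ and for every $Z\subseteq Y$ there is $W\subseteq X$ with $W\vdash Z$. For an event structure $\mu$ with transition relation $\to_\mu$ on subsets of its events, $\mathcal{C}(\mu)$ is the set of sets reachable from $\emptyset$ by finitely many $\to_\mu$-steps. Two such structures $\mu,\mu'$ are transition equivalent iff $\mathcal{C}(\mu)=\mathcal{C}(\mu')$ and for all $X,Y\in\mathcal{C}(\mu)$: $X\to_\mu Y$ iff $X\to_{\mu'}Y$. *)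

theory Defs
  imports Main
begin

definition ses :: "'a set \<Rightarrow> ('a \<times> 'a) set \<Rightarrow> ('a \<times> 'a) set \<Rightarrow> ('a \<times> 'a \<times> 'a) set \<Rightarrow> bool" where
  "ses E cfl en dis \<longleftrightarrow>
     cfl \<subseteq> E \<times> E \<and> irrefl cfl \<and> sym cfl \<and>
     en \<subseteq> E \<times> E \<and>
     dis \<subseteq> E \<times> E \<times> E \<and>
     (\<forall>c d t. (c, d, t) \<in> dis \<longrightarrow> (c, t) \<in> en)"

definition ic :: "('a \<times> 'a) set \<Rightarrow> 'a \<Rightarrow> 'a set" where
  "ic en e = {e'. (e', e) \<in> en}"

definition dc :: "('a \<times> 'a \<times> 'a) set \<Rightarrow> 'a set \<Rightarrow> 'a \<Rightarrow> 'a set" where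
  "dc dis H e = {e'. \<exists>d\<in>H. (e', d, e) \<in> dis}"

definition ses_trans :: "'a set \<Rightarrow> ('a \<times> 'a) set \<Rightarrow> ('a \<times> 'a) set \<Rightarrow> ('a \<times> 'a \<times> 'a) set
    \<Rightarrow> 'a set \<Rightarrow> 'a set \<Rightarrow> bool" where
  "ses_trans E cfl en dis X Y \<longleftrightarrow>
     X \<subseteq> E \<and> Y \<subseteq> E \<and> X \<subseteq> Y \<and>
     (\<forall>e\<in>Y. \<forall>e'\<in>Y. (e, e') \<notin> cfl) \<and>
     (\<forall>e\<in>Y - X. ic en e - dc dis X e \<subseteq> X)"

definition rces :: "'a set \<Rightarrow> ('a set \<times> 'a set) set \<Rightarrow> bool" where
  "rces E enab \<longleftrightarrow> enab \<subseteq> Pow E \<times> Pow E"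

definition rc_trans :: "'a set \<Rightarrow> ('a set \<times> 'a set) set \<Rightarrow> 'a set \<Rightarrow> 'a set \<Rightarrow> bool" where
  "rc_trans E enab X Y \<longleftrightarrow>
     X \<subseteq> E \<and> Y \<subseteq> E \<and> X \<subseteq> Y \<and>
     (\<forall>Z. Z \<subseteq> Y \<longrightarrow> (\<exists>W. W \<subseteq> X \<and> (W, Z) \<in> enab))"

definition configs :: "('a set \<Rightarrow> 'a set \<Rightarrow> bool) \<Rightarrow> 'a set set" where
  "configs T = {X. T\<^sup>*\<^sup>* {} X}"

definition trans_equiv :: "('a set \<Rightarrow> 'a set \<Rightarrow> bool) \<Rightarrow> ('a set \<Rightarrow> 'a set \<Rightarrow> bool) \<Rightarrow> bool" where
  "trans_equiv T T' \<longleftrightarrow>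
     configs T = configs T' \<and>
     (\<forall>X\<in>configs T. \<forall>Y\<in>configs T. T X Y \<longleftrightarrow> T' X Y)"

end

theory Submission
  imports Defs
begin

theorem lemma8:
  fixes E :: "'a set" and cfl en :: "('a \<times> 'a) set" and dis :: "('a \<times> 'a \<times> 'a) set"
  assumes "ses E cfl en dis"
  shows "\<exists>enab. rces E enab \<and> trans_equiv (ses_trans E cfl en dis) (rc_trans E enab)"
proof -
  define enab where "enab = {(W, Z). W \<subseteq> E \<and> Z \<subseteq> E \<and> (\<forall>e\<in>Z. \<forall>e'\<in>Z. (e, e') \<notin> cfl)
      \<and> (\<forall>e\<in>Z - W. ic en e - dc dis W e \<subseteq> W)}"
  have eq: "ses_trans E cfl en dis X Y = rc_trans E enab X Y" for X Y
  proof
    assume h: "ses_trans E cfl en dis X Y"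
    show "rc_trans E enab X Y"
      unfolding rc_trans_def
    proof (intro conjI allI impI)
      fix Z assume "Z \<subseteq> Y"
      have "(X, Z) \<in> enab"
      proof -
        have a: "X \<subseteq> E" "Y \<subseteq> E" "\<forall>e\<in>Y. \<forall>e'\<in>Y. (e, e') \<notin> cfl"
          "\<forall>e\<in>Y - X. ic en e - dc dis X e \<subseteq> X" using h unfolding ses_trans_def by auto
        have "Z \<subseteq> E" using a(2) \<open>Z \<subseteq> Y\<close> by blast
        moreover have "\<forall>e\<in>Z. \<forall>e'\<in>Z. (e, e') \<notin> cfl" using a(3) \<open>Z \<subseteq> Y\<close> by blast
        moreover have "\<forall>e\<in>Z - X. ic en e - dc dis X e \<subseteq> X" using a(4) \<open>Z \<subseteq> Y\<close> by blast
        ultimately show ?thesis using a(1) unfolding enab_def by simp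
      qed
      then show "\<exists>W\<subseteq>X. (W, Z) \<in> enab" by blast
    qed (use h in \<open>auto simp: ses_trans_def\<close>)
  next
    assume h: "rc_trans E enab X Y"
    then obtain W where W: "W \<subseteq> X" "(W, Y) \<in> enab" unfolding rc_trans_def by blast
    have dc: "dc dis W e \<subseteq> dc dis X e" for e using W(1) unfolding dc_def by blast
    have w: "\<forall>e\<in>Y. \<forall>e'\<in>Y. (e, e') \<notin> cfl" "\<forall>e\<in>Y - W. ic en e - dc dis W e \<subseteq> W"
      using W(2) unfolding enab_def by auto
    have x: "X \<subseteq> E" "Y \<subseteq> E" "X \<subseteq> Y" using h unfolding rc_trans_def by auto
    have "\<forall>e\<in>Y - X. ic en e - dc dis X e \<subseteq> X"
    proof
      fix e assume e: "e \<in> Y - X"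
      then have "e \<in> Y - W" using W(1) by blast
      then have "ic en e - dc dis W e \<subseteq> W" using w(2) by blast
      then show "ic en e - dc dis X e \<subseteq> X" using dc[of e] W(1) by blast
    qed
    then show "ses_trans E cfl en dis X Y" unfolding ses_trans_def using x w(1) by blast
  qed
  have r: "rces E enab" unfolding rces_def enab_def by blast
  have "ses_trans E cfl en dis = rc_trans E enab" using eq by (intro ext) blast
  with r show ?thesis unfolding trans_equiv_def by auto
qed

end
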